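(* Suppose $\mathcal X_1,\dots,\mathcal X_n$ satisfy Condition (RIP) with $\delta\in(0,1/3)$. Fix $l\in\{1,\dots,L\}$ and let $\hat{\mathcal A}=\bigotimes_{k=L}^{l+1}\hat{\mathcal A}_k$, $\mathcal A=\bigotimes_{k=L}^{l+1}\mathcal A_k$ and $\hat{\mathcal G}=\bigotimes_{k=l-1}^{1}\hat{\mathcal G}_k$ with all factors in $\mathbb R^{d_k\times p_k\times q_k}$ and $\|\hat{\mathcal A}\|_F=\|\mathcal A\|_F=\|\hat{\mathcal G}\|_F=1$ (for $l=L$, resp. $l=1$, the corresponding product is the array $1$). Let $\hat{\mathbf x}_i=\mathrm{vec}(\tilde{\mathcal X}_i^{(l)}(\hat{\mathcal A},\hat{\mathcal G}))$, $\mathbf x_i=\mathrm{vec}(\tilde{\mathcal X}_i^{(l)}(\mathcal A,\hat{\mathcal G}))$, $\hat{\boldsymbol\Sigma}=\frac1n\sum_i\hat{\mathbf x}_i\hat{\mathbf x}_i^\top$ and $\boldsymbol\Sigma=\frac1n\sum_i\hat{\mathbf x}_i\mathbf x_i^\top$. Then $\hat{\boldsymbol\Sigma}$ is invertible and $$\big\|\hat{\boldsymbol\Sigma}^{-1}\big(\langle\hat{\mathcal A},\mathcal A\rangle\hat{\boldsymbol\Sigma}-\boldsymbol\Sigma\big)\big\|_2\le\frac{3\delta}{1-3\delta}\,\mathrm{dist}(\hat{\mathcal A},\mathcal A),$$ where $\|\cdot\|_2$ is the spectral norm.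
   Context: Arrays are real 3-way arrays; $\langle\cdot,\cdot\rangle$ and $\|\cdot\|_F$ are the entrywise inner product and norm. For $\mathcal A\in\mathbb R^{a_1\times a_2\times a_3}$, $\mathcal B\in\mathbb R^{b_1\times b_2\times b_3}$ the Kronecker product $\mathcal A\otimes\mathcal B\in\mathbb R^{a_1b_1\times a_2b_2\times a_3b_3}$ has entries $(\mathcal A\otimes\mathcal B)_{(h_1-1)b_1+h_2,\,(j_1-1)b_2+j_2,\,(k_1-1)b_3+k_2}=\mathcal A_{h_1j_1k_1}\mathcal B_{h_2j_2k_2}$; it is associative, $\bigotimes_{l=L}^1\mathcal B_l:=\mathcal B_L\otimes\cdots\otimes\mathcal B_1$, and the $1\times1\times1$ array $1$ is neutral. Fix $L\ge2$, positive integers $d_l,p_l,q_l$, $d=\prod_ld_l$, $p=\prod_lp_l$, $q=\prod_lq_l$; vec is a fixed vectorization. For nonzero arrays of the same shape, $\mathrm{dist}(\mathcal U,\mathcal V)=\big(1-\langle\mathcal U,\mathcal V\rangle^2/(\|\mathcal U\|_F^2\|\mathcal V\|_F^2)\big)^{1/2}$. Condition (RIP) with constant $\delta\in(0,1)$: for all arrays $\mathcal B_l^r\in\mathbb R^{d_l\times p_l\times q_l}$ ($l=1,\dots,L$, $r=1,2$), with $\mathcal S=\sum_{r=1}^2\bigotimes_{l=L}^1\mathcal B_l^r$, $(1-\delta)\|\mathcal S\|_F^2\le\frac1n\sum_{i=1}^n\langle\mathcal X_i,\mathcal S\rangle^2\le(1+\delta)\|\mathcal S\|_F^2$. For $l\in\{1,\dots,L\}$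 let $D_l^+=\prod_{k=l+1}^Ld_k$, $D_l^-=\prod_{k=1}^{l-1}d_k$, similarly $P_l^\pm,Q_l^\pm$ (empty products are 1); for $\mathcal A\in\mathbb R^{D_l^+\times P_l^+\times Q_l^+}$, $\mathcal G\in\mathbb R^{D_l^-\times P_l^-\times Q_l^-}$, $\tilde{\mathcal X}_i^{(l)}(\mathcal A,\mathcal G)\in\mathbb R^{d_l\times p_l\times q_l}$ is the unique array with $\langle\tilde{\mathcal X}_i^{(l)}(\mathcal A,\mathcal G),\mathcal B\rangle=\langle\mathcal X_i,\mathcal A\otimes\mathcal B\otimes\mathcal G\rangle$ for all $\mathcal B\in\mathbb R^{d_l\times p_l\times q_l}$. *)

theory Defs
  imports Complex_Main "Jordan_Normal_Form.Matrix"
begin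

text \<open>Real 3-way arrays, represented as functions on (0-based) index triples;
  the shape is carried separately as explicit dimensions.\<close>
type_synonym arr3 = "nat \<Rightarrow> nat \<Rightarrow> nat \<Rightarrow> real"

definition inner3 :: "nat \<times> nat \<times> nat \<Rightarrow> arr3 \<Rightarrow> arr3 \<Rightarrow> real" where
  "inner3 dm U V = (case dm of (a1, a2, a3) \<Rightarrow>
     (\<Sum>h<a1. \<Sum>j<a2. \<Sum>k<a3. U h j k * V h j k))"

definition fnorm3 :: "nat \<times> nat \<times> nat \<Rightarrow> arr3 \<Rightarrow> real" where
  "fnorm3 dm U = sqrt (inner3 dm U U)"

definition dist3 :: "nat \<times> nat \<times> nat \<Rightarrow> arr3 \<Rightarrow> arr3 \<Rightarrow> real" where
  "dist3 dm U V = sqrt (1 - (inner3 dm U V)\<^sup>2 / ((fnorm3 dm U)\<^sup>2 * (fnorm3 dm V)\<^sup>2))"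

text \<open>Kronecker product A \<otimes> B, where B has shape (b1,b2,b3) (0-based version of
  the paper's index formula).\<close>
definition kron3 :: "nat \<times> nat \<times> nat \<Rightarrow> arr3 \<Rightarrow> arr3 \<Rightarrow> arr3" where
  "kron3 bd A B = (case bd of (b1, b2, b3) \<Rightarrow>
     (\<lambda>h j k. A (h div b1) (j div b2) (k div b3) * B (h mod b1) (j mod b2) (k mod b3)))"

definition one3 :: arr3 where "one3 = (\<lambda>_ _ _. 1)"

definition dims :: "(nat \<Rightarrow> nat) \<Rightarrow> (nat \<Rightarrow> nat) \<Rightarrow> (nat \<Rightarrow> nat) \<Rightarrow> nat set \<Rightarrow> nat \<times> nat \<times> nat" where
  "dims d p q S = (prod d S, prod p S, prod q S)"

fun kprod :: "(nat \<Rightarrow> nat) \<Rightarrow> (nat \<Rightarrow> nat) \<Rightarrow> (nat \<Rightarrow> nat) \<Rightarrow> (nat \<Rightarrow> arr3) \<Rightarrow> nat \<Rightarrow> nat \<Rightarrow> arr3" where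
  "kprod d p q B lo 0 = one3"
| "kprod d p q B lo (Suc m) = kron3 (dims d p q {lo..<lo+m}) (B (lo+m)) (kprod d p q B lo m)"

text \<open>\<Otimes>_{l=hi}^{lo} B_l, i.e. B_hi \<otimes> ... \<otimes> B_lo (empty product = 1).\<close>
definition kron_range :: "(nat \<Rightarrow> nat) \<Rightarrow> (nat \<Rightarrow> nat) \<Rightarrow> (nat \<Rightarrow> nat) \<Rightarrow> (nat \<Rightarrow> arr3) \<Rightarrow> nat \<Rightarrow> nat \<Rightarrow> arr3" where
  "kron_range d p q B hi lo = kprod d p q B lo (Suc hi - lo)"

definition RIP :: "nat \<Rightarrow> (nat \<Rightarrow> nat) \<Rightarrow> (nat \<Rightarrow> nat) \<Rightarrow> (nat \<Rightarrow> nat) \<Rightarrow> nat \<Rightarrow> (nat \<Rightarrow> arr3) \<Rightarrow> real \<Rightarrow> bool" where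
  "RIP L d p q n X \<delta> \<longleftrightarrow>
     (\<forall>B1 B2 :: nat \<Rightarrow> arr3.
        let S = (\<lambda>h j k. kron_range d p q B1 L 1 h j k + kron_range d p q B2 L 1 h j k);
            D = dims d p q {1..L};
            E = (1 / real n) * (\<Sum>i=1..n. (inner3 D (X i) S)\<^sup>2)
        in (1 - \<delta>) * (fnorm3 D S)\<^sup>2 \<le> E \<and> E \<le> (1 + \<delta>) * (fnorm3 D S)\<^sup>2)"

definition unit3 :: "nat \<Rightarrow> nat \<Rightarrow> nat \<Rightarrow> arr3" where
  "unit3 h j k = (\<lambda>h' j' k'. if h' = h \<and> j' = j \<and> k' = k then 1 else 0)"

text \<open>The array Xtilde_i^(l)(A,G) in R^{d_l x p_l x q_l}: its (h,j,k) entry is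
  <X_i, A \<otimes> e_{hjk} \<otimes> G>, which is the unique array with
  <Xtilde, B> = <X_i, A \<otimes> B \<otimes> G> for all B (entries outside the shape set to 0).\<close>
definition Xtilde :: "nat \<Rightarrow> (nat \<Rightarrow> nat) \<Rightarrow> (nat \<Rightarrow> nat) \<Rightarrow> (nat \<Rightarrow> nat) \<Rightarrow> nat \<Rightarrow> arr3 \<Rightarrow> arr3 \<Rightarrow> arr3 \<Rightarrow> arr3" where
  "Xtilde L d p q l Xi A G = (\<lambda>h j k.
     if h < d l \<and> j < p l \<and> k < q l then
       inner3 (dims d p q {1..L}) Xi
         (kron3 (dims d p q {1..l}) A (kron3 (dims d p q {1..<l}) (unit3 h j k) G))
     else 0)"

definition vec3 :: "nat \<times> nat \<times> nat \<Rightarrow> arr3 \<Rightarrow> real vec" where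
  "vec3 dm U = (case dm of (a1, a2, a3) \<Rightarrow>
     vec (a1 * a2 * a3) (\<lambda>r. U (r div (a2 * a3)) ((r div a3) mod a2) (r mod a3)))"

definition cov_mat :: "nat \<Rightarrow> nat \<Rightarrow> (nat \<Rightarrow> real vec) \<Rightarrow> (nat \<Rightarrow> real vec) \<Rightarrow> real mat" where
  "cov_mat m n x y = mat m m (\<lambda>(a, b). (1 / real n) * (\<Sum>i=1..n. x i $ a * y i $ b))"

definition mat_inv :: "nat \<Rightarrow> real mat \<Rightarrow> real mat" where
  "mat_inv m A = (SOME B. B \<in> carrier_mat m m \<and> A * B = 1\<^sub>m m \<and> B * A = 1\<^sub>m m)"

definition vnorm :: "real vec \<Rightarrow> real" where
  "vnorm v = sqrt (v \<bullet> v)"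

definition spec_norm :: "nat \<Rightarrow> real mat \<Rightarrow> real" where
  "spec_norm m M = Sup {vnorm (M *\<^sub>v v) | v. v \<in> carrier_vec m \<and> vnorm v \<le> 1}"

end

theory Submission
  imports Defs "Jordan_Normal_Form.Determinant"
begin


lemma sum_divmod:
  fixes F :: "nat \<Rightarrow> nat \<Rightarrow> 'a::comm_monoid_add"
  shows "(\<Sum>h<a*b. F (h div b) (h mod b)) = (\<Sum>i<a. \<Sum>j<b. F i j)"
proof (cases "b = 0")
  case True then show ?thesis by simp
next
  case False
  have "(\<Sum>h<a*b. F (h div b) (h mod b)) = (\<Sum>i<a. \<Sum>h\<in>{i*b..<i*b+b}. F (h div b) (h mod b))"
    using sum.nat_group[of "\<lambda>h. F (h div b) (h mod b)" b a] by simp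
  also have "\<dots> = (\<Sum>i<a. \<Sum>j<b. F i j)"
  proof (rule sum.cong[OF refl])
    fix i assume "i \<in> {..<a}"
    have "(\<Sum>h\<in>{i*b..<i*b+b}. F (h div b) (h mod b)) = (\<Sum>j\<in>{0..<b}. F ((j + i*b) div b) ((j+i*b) mod b))"
      using sum.shift_bounds_nat_ivl[of "\<lambda>h. F (h div b) (h mod b)" 0 "i*b" b] by (simp add: add.commute)
    also have "\<dots> = (\<Sum>j<b. F i j)"
      using False by (auto intro!: sum.cong simp: atLeast0LessThan)
    finally show "(\<Sum>h\<in>{i*b..<i*b+b}. F (h div b) (h mod b)) = (\<Sum>j<b. F i j)" .
  qed
  finally show ?thesis .
qed

lemma sum_divmod_prod:
  fixes f g :: "nat \<Rightarrow> 'a::comm_semiring_1"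
  shows "(\<Sum>h<a*b. f (h div b) * g (h mod b)) = (\<Sum>i<a. f i) * (\<Sum>j<b. g j)"
  using sum_divmod[where F="\<lambda>i j. f i * g j" and a=a and b=b] by (simp add: sum_product)

lemma inner3_kron:
  assumes "b1 > 0" "b2 > 0" "b3 > 0"
  shows "inner3 (a1*b1, a2*b2, a3*b3) (kron3 (b1,b2,b3) A B) (kron3 (b1,b2,b3) A' B')
     = inner3 (a1,a2,a3) A A' * inner3 (b1,b2,b3) B B'"
proof -
  have "inner3 (a1*b1, a2*b2, a3*b3) (kron3 (b1,b2,b3) A B) (kron3 (b1,b2,b3) A' B')
     = (\<Sum>h<a1*b1. \<Sum>j<a2*b2. \<Sum>k<a3*b3. (A (h div b1) (j div b2) (k div b3) * A' (h div b1) (j div b2) (k div b3))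
          * (B (h mod b1) (j mod b2) (k mod b3) * B' (h mod b1) (j mod b2) (k mod b3)))"
    unfolding inner3_def kron3_def by (simp add: mult_ac)
  also have "\<dots> = (\<Sum>h<a1*b1. \<Sum>j<a2*b2. (\<Sum>k<a3. A (h div b1) (j div b2) k * A' (h div b1) (j div b2) k)
          * (\<Sum>k<b3. B (h mod b1) (j mod b2) k * B' (h mod b1) (j mod b2) k))"
    by (intro sum.cong refl, rule sum_divmod_prod)
  also have "\<dots> = (\<Sum>h<a1*b1. (\<Sum>j<a2. \<Sum>k<a3. A (h div b1) j k * A' (h div b1) j k)
          * (\<Sum>j<b2. \<Sum>k<b3. B (h mod b1) j k * B' (h mod b1) j k))"
    by (intro sum.cong refl, rule sum_divmod_prod[where f="\<lambda>j. \<Sum>k<a3. A _ j k * A' _ j k" and g="\<lambda>j. \<Sum>k<b3. B _ j k * B' _ j k"])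
  also have "\<dots> = inner3 (a1,a2,a3) A A' * inner3 (b1,b2,b3) B B'"
    unfolding inner3_def prod.case by (rule sum_divmod_prod[where f="\<lambda>h. \<Sum>j<a2. \<Sum>k<a3. A h j k * A' h j k" and g="\<lambda>h. \<Sum>j<b2. \<Sum>k<b3. B h j k * B' h j k"])
  finally show ?thesis .
qed

lemma divmod_aux:
  fixes h b c :: nat
  assumes "c > 0"
  shows "h div (b*c) = h div c div b" "h mod (b*c) div c = h div c mod b" "h mod (b*c) mod c = h mod c"
proof -
  show "h div (b*c) = h div c div b" by (metis div_mult2_eq mult.commute)
  have m: "h mod (c*b) = c * (h div c mod b) + h mod c" by (rule mod_mult2_eq)
  show "h mod (b*c) div c = h div c mod b" using m assms by (simp add: mult.commute)
  show "h mod (b*c) mod c = h mod c" using m assms by (simp add: mult.commute)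
qed

lemma kron3_assoc:
  assumes "c1 > 0" "c2 > 0" "c3 > 0"
  shows "kron3 (c1,c2,c3) (kron3 (b1,b2,b3) A B) C = kron3 (b1*c1,b2*c2,b3*c3) A (kron3 (c1,c2,c3) B C)"
  unfolding kron3_def using assms by (auto simp: divmod_aux fun_eq_iff mult.assoc)

lemma kprod_cong:
  assumes "\<And>k. lo \<le> k \<Longrightarrow> k < lo + m \<Longrightarrow> F k = F' k"
  shows "kprod d p q F lo m = kprod d p q F' lo m"
  using assms by (induction m) auto

lemma dims_empty: "dims d p q {} = (1,1,1)" by (simp add: dims_def)

lemma kron3_one_right: "kron3 (1,1,1) A one3 = A"
  unfolding kron3_def one3_def by simp

lemma kron3_one_left_shape:
  assumes "h < b1" "j < b2" "k < b3"
  shows "kron3 (b1,b2,b3) one3 X h j k = X h j k"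
  unfolding kron3_def one3_def using assms by simp

lemma dims_pos:
  fixes d p q :: "nat \<Rightarrow> nat"
  assumes "\<forall>k\<in>S. d k > 0 \<and> p k > 0 \<and> q k > 0"
  shows "prod d S > 0" "prod p S > 0" "prod q S > 0"
  using assms by (simp_all add: prod_pos)

lemma prod_split_ivl:
  fixes g :: "nat \<Rightarrow> nat"
  shows "prod g {lo..<lo+(m1+m2)} = prod g {lo+m1..<lo+m1+m2} * prod g {lo..<lo+m1}"
  using prod.atLeastLessThan_concat[of lo "lo+m1" "lo+m1+m2" g] by (simp add: mult.commute add.assoc)

lemma kprod_split:
  assumes "\<forall>k\<in>{lo..<lo+m1+Suc m2}. d k > 0 \<and> p k > 0 \<and> q k > 0"
  shows "kprod d p q F lo (m1 + Suc m2) = kron3 (dims d p q {lo..<lo+m1}) (kprod d p q F (lo+m1) (Suc m2)) (kprod d p q F lo m1)"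
  using assms
proof (induction m2)
  case 0
  then show ?case by (simp add: dims_empty kron3_def one3_def)
next
  case (Suc m2)
  have pos: "\<forall>k\<in>{lo..<lo+m1}. d k > 0 \<and> p k > 0 \<and> q k > 0" using Suc.prems by auto
  note P = dims_pos[OF pos]
  have IH: "kprod d p q F lo (m1 + Suc m2) = kron3 (dims d p q {lo..<lo+m1}) (kprod d p q F (lo+m1) (Suc m2)) (kprod d p q F lo m1)"
    using Suc by auto
  have L: "kprod d p q F lo (m1+Suc(Suc m2)) = kron3 (dims d p q {lo..<lo+(m1+Suc m2)}) (F(lo+(m1+Suc m2))) (kprod d p q F lo (m1+Suc m2))"
    by (simp only: add_Suc_right kprod.simps)
  have R: "kprod d p q F (lo+m1) (Suc(Suc m2)) = kron3 (dims d p q {lo+m1..<lo+m1+Suc m2}) (F(lo+m1+Suc m2)) (kprod d p q F (lo+m1) (Suc m2))"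
    by (simp only: kprod.simps)
  show ?case
    unfolding L R IH unfolding dims_def prod_split_ivl
    by (simp only: kron3_assoc[OF P] add.assoc)
qed

lemma kron_full:
  fixes d p q :: "nat \<Rightarrow> nat"
  assumes pos: "\<forall>k\<in>{1..L}. d k > 0 \<and> p k > 0 \<and> q k > 0"
    and l: "l \<in> {1..L}"
    and hjk: "h < prod d {1..L}" "j < prod p {1..L}" "k < prod q {1..L}"
  shows "kron_range d p q (\<lambda>k. if k < l then Ghf k else if k = l then B else Ahf k) L 1 h j k
    = kron3 (dims d p q {1..l}) (kron_range d p q Ahf L (l+1)) (kron3 (dims d p q {1..<l}) B (kron_range d p q Ghf (l-1) 1)) h j k"
proof -
  define F where "F = (\<lambda>k. if k < l then Ghf k else if k = l then B else Ahf k)"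
  have l1: "1 \<le> l" "l \<le> L" using l by auto
  have "kprod d p q F 1 ((l-1) + Suc 0) = kron3 (dims d p q {1..<1+(l-1)}) (kprod d p q F (1+(l-1)) (Suc 0)) (kprod d p q F 1 (l-1))"
    by (rule kprod_split) (use pos l1 in auto)
  moreover have "kprod d p q F 1 (l-1) = kprod d p q Ghf 1 (l-1)"
    by (rule kprod_cong) (auto simp: F_def)
  moreover have "kprod d p q F (1+(l-1)) (Suc 0) = B"
    using l1 by (simp add: F_def dims_empty kron3_def one3_def)
  ultimately have G: "kprod d p q F 1 l = kron3 (dims d p q {1..<l}) B (kron_range d p q Ghf (l-1) 1)"
    using l1 by (simp add: kron_range_def)
  show ?thesis
  proof (cases "l = L")
    case True
    have "kron_range d p q Ahf L (l+1) = one3" using True by (simp add: kron_range_def)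
    then show ?thesis unfolding F_def[symmetric] using True G hjk
      by (simp add: kron_range_def dims_def kron3_one_left_shape)
  next
    case False
    have "kprod d p q F 1 (l + Suc (L-l-1)) = kron3 (dims d p q {1..<1+l}) (kprod d p q F (1+l) (Suc (L-l-1))) (kprod d p q F 1 l)"
      by (rule kprod_split) (use pos l1 False in auto)
    moreover have "kprod d p q F (1+l) (Suc (L-l-1)) = kprod d p q Ahf (1+l) (Suc (L-l-1))"
      by (rule kprod_cong) (auto simp: F_def)
    moreover have "l + Suc (L-l-1) = L" "Suc (L-l-1) = Suc L - (l+1)" "{1..<1+l} = {1..l}" using False l1 by auto
    ultimately show ?thesis unfolding F_def[symmetric] using G
      by (simp del: kprod.simps add: kron_range_def add.commute)
  qed
qed

definition box :: "nat \<times> nat \<times> nat \<Rightarrow> (nat \<times> nat \<times> nat) set" where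
  "box dm = (case dm of (a1,a2,a3) \<Rightarrow> {..<a1} \<times> {..<a2} \<times> {..<a3})"

definition app3 :: "arr3 \<Rightarrow> nat \<times> nat \<times> nat \<Rightarrow> real" where
  "app3 U w = U (fst w) (fst (snd w)) (snd (snd w))"

lemma finite_box: "finite (box dm)"
  by (cases dm) (auto simp: box_def)

lemma inner3_box: "inner3 dm U V = (\<Sum>w\<in>box dm. app3 U w * app3 V w)"
proof -
  obtain a1 a2 a3 where dm: "dm = (a1,a2,a3)" by (cases dm) auto
  have "inner3 dm U V = (\<Sum>h<a1. \<Sum>jk\<in>{..<a2}\<times>{..<a3}. U h (fst jk) (snd jk) * V h (fst jk) (snd jk))"
    unfolding dm inner3_def by (simp add: sum.cartesian_product split_def)
  also have "\<dots> = (\<Sum>w\<in>box dm. app3 U w * app3 V w)"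
    unfolding dm box_def app3_def by (simp add: sum.cartesian_product split_def)
  finally show ?thesis .
qed

lemma app3_unit: "app3 (unit3 (fst w) (fst (snd w)) (snd (snd w))) v = (if v = w then 1 else 0)"
  unfolding app3_def unit3_def by (auto simp: prod_eq_iff)

lemma swap_aux:
  fixes b :: "'a \<Rightarrow> real" and x :: "'b \<Rightarrow> real" and k :: "'a \<Rightarrow> 'b \<Rightarrow> real"
  shows "(\<Sum>w\<in>W. b w * (\<Sum>z\<in>Z. x z * k w z)) = (\<Sum>z\<in>Z. x z * (\<Sum>w\<in>W. b w * k w z))"
  by (simp add: sum_distrib_left mult.left_commute sum.swap[of _ W])

lemma Xtilde_prop:
  fixes d p q :: "nat \<Rightarrow> nat"
  assumes DL: "dims d p q {1..l} = (d l * g1, p l * g2, q l * g3)"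
    and DG: "dims d p q {1..<l} = (g1, g2, g3)"
    and g: "g1 > 0" "g2 > 0" "g3 > 0" and dl: "d l > 0" "p l > 0" "q l > 0"
  shows "inner3 (d l, p l, q l) B (Xtilde L d p q l Xi A G)
     = inner3 (dims d p q {1..L}) Xi (kron3 (dims d p q {1..l}) A (kron3 (dims d p q {1..<l}) B G))"
proof -
  define D where "D = dims d p q {1..L}"
  define K where "K = (\<lambda>U. kron3 (dims d p q {1..l}) A (kron3 (dims d p q {1..<l}) U G))"
  define mid where "mid = (\<lambda>z::nat\<times>nat\<times>nat. ((fst z mod (d l * g1)) div g1, (fst (snd z) mod (p l * g2)) div g2, (snd (snd z) mod (q l * g3)) div g3))"
  define cf where "cf = (\<lambda>z::nat\<times>nat\<times>nat. A (fst z div (d l * g1)) (fst (snd z) div (p l * g2)) (snd (snd z) div (q l * g3))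
       * G ((fst z mod (d l * g1)) mod g1) ((fst (snd z) mod (p l * g2)) mod g2) ((snd (snd z) mod (q l * g3)) mod g3))"
  have Kapp: "app3 (K U) z = cf z * app3 U (mid z)" for U z
    unfolding K_def DL DG kron3_def app3_def cf_def mid_def by simp
  have midbox: "mid z \<in> box (d l, p l, q l)" for z
    using g dl unfolding mid_def box_def by (auto simp: divmod_aux)
  have "inner3 (d l, p l, q l) B (Xtilde L d p q l Xi A G)
      = (\<Sum>w\<in>box (d l, p l, q l). app3 B w * (\<Sum>z\<in>box D. app3 Xi z * app3 (K (unit3 (fst w) (fst (snd w)) (snd (snd w)))) z))"
    unfolding inner3_box
    by (rule sum.cong[OF refl]) (auto simp: box_def app3_def Xtilde_def D_def K_def inner3_box)
  also have "\<dots> = (\<Sum>z\<in>box D. app3 Xi z * (\<Sum>w\<in>box (d l, p l, q l). app3 B w * app3 (K (unit3 (fst w) (fst (snd w)) (snd (snd w)))) z))"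
    by (rule swap_aux)
  also have "\<dots> = (\<Sum>z\<in>box D. app3 Xi z * app3 (K B) z)"
  proof (rule sum.cong[OF refl])
    fix z
    have "(\<Sum>w\<in>box (d l, p l, q l). app3 B w * app3 (K (unit3 (fst w) (fst (snd w)) (snd (snd w)))) z)
        = (\<Sum>w\<in>box (d l, p l, q l). if w = mid z then cf z * app3 B (mid z) else 0)"
      by (rule sum.cong[OF refl]) (auto simp: Kapp app3_unit)
    also have "\<dots> = cf z * app3 B (mid z)"
      using midbox[of z] finite_box by (simp add: sum.delta')
    finally show "app3 Xi z * (\<Sum>w\<in>box (d l, p l, q l). app3 B w * app3 (K (unit3 (fst w) (fst (snd w)) (snd (snd w)))) z)
        = app3 Xi z * app3 (K B) z" by (simp add: Kapp)
  qed
  also have "\<dots> = inner3 D Xi (K B)" by (simp add: inner3_box)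
  finally show ?thesis unfolding D_def K_def .
qed

definition arrv :: "nat \<Rightarrow> nat \<Rightarrow> real vec \<Rightarrow> arr3" where
  "arrv a2 a3 v = (\<lambda>h j k. v $ (h*(a2*a3) + j*a3 + k))"

lemma vec3_scalar:
  assumes a: "a2 > 0" "a3 > 0" and v: "v \<in> carrier_vec (a1*a2*a3)"
  shows "vec3 (a1,a2,a3) U \<bullet> v = inner3 (a1,a2,a3) (arrv a2 a3 v) U"
proof -
  have dv: "dim_vec v = a1*(a2*a3)" using v by (simp add: mult.assoc)
  have "vec3 (a1,a2,a3) U \<bullet> v = (\<Sum>r<a1*(a2*a3). U (r div (a2*a3)) ((r div a3) mod a2) (r mod a3) * v $ r)"
    unfolding vec3_def scalar_prod_def dv by (simp add: atLeast0LessThan mult.assoc)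
  also have "\<dots> = (\<Sum>r<a1*(a2*a3). (\<lambda>i s. U i (s div a3) (s mod a3) * v $ (i*(a2*a3) + s)) (r div (a2*a3)) (r mod (a2*a3)))"
  proof (intro sum.cong refl)
    fix r
    have e: "r div (a2*a3) * (a2*a3) + r mod (a2*a3) = r" by (rule div_mult_mod_eq)
    show "U (r div (a2*a3)) ((r div a3) mod a2) (r mod a3) * v $ r = (\<lambda>i s. U i (s div a3) (s mod a3) * v $ (i*(a2*a3) + s)) (r div (a2*a3)) (r mod (a2*a3))"
      using a by (simp only: e divmod_aux(2,3))
  qed
  also have "\<dots> = (\<Sum>i<a1. \<Sum>s<a2*a3. U i (s div a3) (s mod a3) * v $ (i*(a2*a3) + s))"
    by (rule sum_divmod)
  also have "\<dots> = (\<Sum>i<a1. \<Sum>j<a2. \<Sum>k<a3. U i j k * v $ (i*(a2*a3) + (j*a3+k)))"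
  proof (rule sum.cong[OF refl])
    fix i
    have "(\<Sum>s<a2*a3. U i (s div a3) (s mod a3) * v $ (i*(a2*a3) + s))
      = (\<Sum>s<a2*a3. (\<lambda>j k. U i j k * v $ (i*(a2*a3) + (j*a3+k))) (s div a3) (s mod a3))"
      by (rule sum.cong[OF refl]) (simp only: div_mult_mod_eq)
    also have "\<dots> = (\<Sum>j<a2. \<Sum>k<a3. U i j k * v $ (i*(a2*a3) + (j*a3+k)))"
      by (rule sum_divmod)
    finally show "(\<Sum>s<a2*a3. U i (s div a3) (s mod a3) * v $ (i*(a2*a3) + s)) = (\<Sum>j<a2. \<Sum>k<a3. U i j k * v $ (i*(a2*a3) + (j*a3+k)))" .
  qed
  also have "\<dots> = inner3 (a1,a2,a3) (arrv a2 a3 v) U"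
    unfolding inner3_def arrv_def by (simp add: mult.commute add.assoc)
  finally show ?thesis .
qed

lemma vec3_arrv:
  assumes a: "a2 > 0" "a3 > 0" and v: "v \<in> carrier_vec (a1*a2*a3)"
  shows "vec3 (a1,a2,a3) (arrv a2 a3 v) = v"
proof (rule eq_vecI)
  show "dim_vec (vec3 (a1,a2,a3) (arrv a2 a3 v)) = dim_vec v" using v by (simp add: vec3_def)
  fix r assume "r < dim_vec v"
  then have r: "r < a1*a2*a3" using v by simp
  have m: "r mod (a3*a2) = a3*(r div a3 mod a2) + r mod a3" by (rule mod_mult2_eq)
  have "r div (a2*a3) * (a2*a3) + (r div a3 mod a2)*a3 + r mod a3 = r"
    using m by (metis add.assoc div_mult_mod_eq mult.commute)
  then show "vec3 (a1,a2,a3) (arrv a2 a3 v) $ r = v $ r"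
    using r by (simp add: vec3_def arrv_def)
qed

lemma cov_quad:
  assumes w: "w \<in> carrier_vec m" and v: "v \<in> carrier_vec m"
    and x: "\<And>i. x i \<in> carrier_vec m" and y: "\<And>i. y i \<in> carrier_vec m"
  shows "w \<bullet> (cov_mat m n x y *\<^sub>v v) = (1 / real n) * (\<Sum>i=1..n. (w \<bullet> x i) * (y i \<bullet> v))"
proof -
  have dx: "dim_vec (x i) = m" "dim_vec (y i) = m" for i using x y by auto
  have dv: "dim_vec v = m" using v by auto
  have "w \<bullet> (cov_mat m n x y *\<^sub>v v) = (\<Sum>a<m. w $ a * (\<Sum>b<m. ((1 / real n) * (\<Sum>i=1..n. x i $ a * y i $ b)) * v $ b))"
    unfolding scalar_prod_def cov_mat_def mult_mat_vec_def
    by (simp add: dv atLeast0LessThan row_def)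
  also have "\<dots> = (1 / real n) * (\<Sum>a<m. \<Sum>b<m. \<Sum>i=1..n. w $ a * x i $ a * (y i $ b * v $ b))"
    by (simp add: sum_distrib_left sum_distrib_right mult_ac)
  also have "\<dots> = (1 / real n) * (\<Sum>i=1..n. \<Sum>a<m. \<Sum>b<m. w $ a * x i $ a * (y i $ b * v $ b))"
  proof -
    have "(\<Sum>a<m. \<Sum>b<m. \<Sum>i=1..n. w $ a * x i $ a * (y i $ b * v $ b)) = (\<Sum>a<m. \<Sum>i=1..n. \<Sum>b<m. w $ a * x i $ a * (y i $ b * v $ b))"
      by (rule sum.cong[OF refl]) (rule sum.swap)
    also have "\<dots> = (\<Sum>i=1..n. \<Sum>a<m. \<Sum>b<m. w $ a * x i $ a * (y i $ b * v $ b))"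
      by (rule sum.swap)
    finally show ?thesis by simp
  qed
  also have "\<dots> = (1 / real n) * (\<Sum>i=1..n. (w \<bullet> x i) * (y i \<bullet> v))"
    unfolding scalar_prod_def dx dv by (simp add: atLeast0LessThan sum_product)
  finally show ?thesis .
qed

lemma inner3_lin_left:
  "inner3 dm (\<lambda>h j k. a * U h j k + b * V h j k) W = a * inner3 dm U W + b * inner3 dm V W"
  unfolding inner3_box app3_def by (simp add: algebra_simps sum.distrib sum_distrib_left)

lemma inner3_comm: "inner3 dm U V = inner3 dm V U"
  unfolding inner3_box by (simp add: mult.commute)

lemma inner3_lin_right:
  "inner3 dm W (\<lambda>h j k. a * U h j k + b * V h j k) = a * inner3 dm W U + b * inner3 dm W V"
  using inner3_lin_left[of dm a U b V W] by (simp add: inner3_comm)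

lemma inner3_add_right:
  "inner3 dm W (\<lambda>h j k. U h j k + V h j k) = inner3 dm W U + inner3 dm W V"
  using inner3_lin_right[of dm W 1 U 1 V] by simp

lemma inner3_zero_left: "inner3 dm (\<lambda>h j k. 0) W = 0"
  unfolding inner3_box app3_def by simp

lemma inner3_nonneg: "inner3 dm U U \<ge> 0"
  unfolding inner3_box by (auto intro: sum_nonneg)

lemma inner3_cong_right:
  assumes "\<And>h j k. h < a1 \<Longrightarrow> j < a2 \<Longrightarrow> k < a3 \<Longrightarrow> V h j k = V' h j k"
  shows "inner3 (a1,a2,a3) U V = inner3 (a1,a2,a3) U V'"
  unfolding inner3_def using assms by (auto intro!: sum.cong)

lemma inner3_cong_both:
  assumes "\<And>h j k. h < a1 \<Longrightarrow> j < a2 \<Longrightarrow> k < a3 \<Longrightarrow> V h j k = V' h j k"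
  shows "inner3 (a1,a2,a3) V V = inner3 (a1,a2,a3) V' V'"
  unfolding inner3_def using assms by (auto intro!: sum.cong)

lemma real_key:
  fixes \<delta> a b C :: real
  assumes "0 < \<delta>" "\<delta> < 1/3" "a \<ge> 0" "b \<ge> 0" "(1-\<delta>)*a^2 \<le> C"
    and t: "\<And>t. t > 0 \<Longrightarrow> 4*t*C \<le> 2*\<delta>*(a^2 + t^2*b^2)"
  shows "(1-\<delta>)*a \<le> \<delta>*b"
proof (cases "a = 0")
  case True then show ?thesis using assms by simp
next
  case False
  then have a: "a > 0" using assms by simp
  show ?thesis
  proof (cases "b = 0")
    case True
    have "4*1*C \<le> 2*\<delta>*(a^2 + 1^2*b^2)" by (rule t) simp
    then have e: "4*C \<le> 2*\<delta>*a^2" using True by simp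
    have "4*((1-\<delta>)*a^2) \<le> 2*\<delta>*a^2" using e assms(5) by linarith
    then have "(4 - 6*\<delta>)*a^2 \<le> 0" by (simp add: algebra_simps)
    moreover have "(4 - 6*\<delta>)*a^2 > 0" using a assms by simp
    ultimately show ?thesis by simp
  next
    case False
    then have b: "b > 0" using assms by simp
    have "4*(a/b)*C \<le> 2*\<delta>*(a^2 + (a/b)^2*b^2)" by (rule t) (use a b in simp)
    then have "4*(a/b)*C \<le> 4*\<delta>*a^2" using b by (simp add: power_divide)
    then have "4*a*C \<le> 4*\<delta>*a^2*b" using b by (simp add: field_simps)
    then have "C \<le> \<delta>*a*b" using a by (simp add: power2_eq_square mult_ac)
    then have "(1-\<delta>)*a*a \<le> \<delta>*b*a" using assms by (simp add: power2_eq_square mult_ac)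
    then show ?thesis using a by simp
  qed
qed

lemma scalar_prod_self_zero:
  fixes u :: "real vec"
  assumes "u \<in> carrier_vec m" "u \<bullet> u = 0"
  shows "u = 0\<^sub>v m"
proof (rule eq_vecI)
  show "dim_vec u = dim_vec (0\<^sub>v m)" using assms by simp
  fix i assume i: "i < dim_vec (0\<^sub>v m)"
  have "(\<Sum>j\<in>{0..<m}. u $ j * u $ j) = 0" using assms by (simp add: scalar_prod_def)
  then have "\<forall>j\<in>{0..<m}. u $ j * u $ j = 0" by (subst (asm) sum_nonneg_eq_0_iff) auto
  then show "u $ i = 0\<^sub>v m $ i" using i by auto
qed

lemma scalar_prod_self_nonneg: "(u :: real vec) \<bullet> u \<ge> 0"
  unfolding scalar_prod_def by (auto intro: sum_nonneg)

lemma cov_comb: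
  assumes x: "\<And>i. x i \<in> carrier_vec m" and y: "\<And>i. y i \<in> carrier_vec m"
  shows "c \<cdot>\<^sub>m cov_mat m n x x - cov_mat m n x y = cov_mat m n x (\<lambda>i. c \<cdot>\<^sub>v x i - y i)"
proof -
  have d: "dim_vec (x i) = m" "dim_vec (y i) = m" for i using x y by auto
  show ?thesis unfolding cov_mat_def
    by (rule eq_matI) (auto simp: d algebra_simps diff_divide_distrib sum_subtractf sum_distrib_left sum_divide_distrib)
qed

lemma smult_minus_sprod:
  assumes "a \<in> carrier_vec m" "b \<in> carrier_vec m" "v \<in> carrier_vec m"
  shows "(c \<cdot>\<^sub>v a - b) \<bullet> v = c * (a \<bullet> v) - (b :: real vec) \<bullet> v"
  using assms unfolding scalar_prod_def by (simp add: algebra_simps sum_subtractf sum_distrib_left)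

lemma inner3_scale_left: "inner3 dm (\<lambda>h j k. a * U h j k) W = a * inner3 dm U W"
  unfolding inner3_box app3_def by (simp add: sum_distrib_left mult_ac)

lemma inner3_scale_right: "inner3 dm W (\<lambda>h j k. a * U h j k) = a * inner3 dm W U"
  unfolding inner3_box app3_def by (simp add: sum_distrib_left mult_ac)

lemma inner3_add_left:
  "inner3 dm (\<lambda>h j k. U h j k + V h j k) W = inner3 dm U W + inner3 dm V W"
  using inner3_lin_left[of dm 1 U 1 V W] by simp

lemma inner3_axpy_left:
  "inner3 dm (\<lambda>h j k. U h j k + b * V h j k) W = inner3 dm U W + b * inner3 dm V W"
  using inner3_lin_left[of dm 1 U b V W] by simp

lemma inner3_axpy_right:
  "inner3 dm W (\<lambda>h j k. U h j k + b * V h j k) = inner3 dm W U + b * inner3 dm W V"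
  using inner3_lin_right[of dm W 1 U b V] by simp



theorem lemma4:
  fixes L n l :: nat and d p q :: "nat \<Rightarrow> nat" and X :: "nat \<Rightarrow> arr3" and \<delta> :: real
    and Ahf Af Ghf :: "nat \<Rightarrow> arr3"
  assumes "L \<ge> 2"
    and "\<forall>k\<in>{1..L}. d k > 0 \<and> p k > 0 \<and> q k > 0"
    and "0 < \<delta>" and "\<delta> < 1/3"
    and "RIP L d p q n X \<delta>"
    and "l \<in> {1..L}"
    and "fnorm3 (dims d p q {l<..L}) (kron_range d p q Ahf L (l+1)) = 1"
    and "fnorm3 (dims d p q {l<..L}) (kron_range d p q Af L (l+1)) = 1"
    and "fnorm3 (dims d p q {1..<l}) (kron_range d p q Ghf (l-1) 1) = 1"
  shows
    "let Ah = kron_range d p q Ahf L (l+1);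
         A = kron_range d p q Af L (l+1);
         Gh = kron_range d p q Ghf (l-1) 1;
         m = d l * p l * q l;
         xh = (\<lambda>i. vec3 (d l, p l, q l) (Xtilde L d p q l (X i) Ah Gh));
         x = (\<lambda>i. vec3 (d l, p l, q l) (Xtilde L d p q l (X i) A Gh));
         Sh = cov_mat m n xh xh;
         S = cov_mat m n xh x
     in invertible_mat Sh \<and>
        spec_norm m (mat_inv m Sh * (inner3 (dims d p q {l<..L}) Ah A \<cdot>\<^sub>m Sh - S))
          \<le> 3 * \<delta> / (1 - 3 * \<delta>) * dist3 (dims d p q {l<..L}) Ah A"
proof -
  define Ah where "Ah = kron_range d p q Ahf L (l+1)"
  define A where "A = kron_range d p q Af L (l+1)"
  define Gh where "Gh = kron_range d p q Ghf (l-1) 1"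
  define m where "m = d l * p l * q l"
  define Xth where "Xth = (\<lambda>i. Xtilde L d p q l (X i) Ah Gh)"
  define Xt where "Xt = (\<lambda>i. Xtilde L d p q l (X i) A Gh)"
  define xh where "xh = (\<lambda>i. vec3 (d l, p l, q l) (Xth i))"
  define x where "x = (\<lambda>i. vec3 (d l, p l, q l) (Xt i))"
  define Sh where "Sh = cov_mat m n xh xh"
  define S where "S = cov_mat m n xh x"
  define DA where "DA = dims d p q {l<..L}"
  define DL where "DL = dims d p q {1..l}"
  define DG where "DG = dims d p q {1..<l}"
  define D where "D = dims d p q {1..L}"
  define Dl where "Dl = (d l, p l, q l)"
  define c where "c = inner3 DA Ah A"
  define K where "K = (\<lambda>Y B. kron3 DL Y (kron3 DG B Gh))"
  define E where "E = (\<lambda>T. 1 / real n * (\<Sum>i=1..n. (inner3 D (X i) T)^2))"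
  define ar where "ar = arrv (p l) (q l)"
  define g1 where "g1 = prod d {1..<l}"
  define g2 where "g2 = prod p {1..<l}"
  define g3 where "g3 = prod q {1..<l}"
  define a1 where "a1 = prod d {l<..L}"
  define a2 where "a2 = prod p {l<..L}"
  define a3 where "a3 = prod q {l<..L}"
  have l1: "1 \<le> l" "l \<le> L" using assms(6) by auto
  have pos: "\<forall>k\<in>{1..L}. d k > 0 \<and> p k > 0 \<and> q k > 0" using assms(2) .
  have dl: "d l > 0" "p l > 0" "q l > 0" using pos l1 by auto
  have posG: "\<forall>k\<in>{1..<l}. d k > 0 \<and> p k > 0 \<and> q k > 0" using pos l1 by auto
  have g: "g1 > 0" "g2 > 0" "g3 > 0" using dims_pos[OF posG] by (auto simp: g1_def g2_def g3_def)
  have DGe: "DG = (g1,g2,g3)" by (simp add: DG_def dims_def g1_def g2_def g3_def)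
  have s1: "{1..l} = insert l {1..<l}" using l1 by auto
  have DLe: "DL = (d l * g1, p l * g2, q l * g3)"
    unfolding DL_def dims_def s1 g1_def g2_def g3_def by simp
  have s2: "{1..L} = {l<..L} \<union> {1..l}" using l1 by auto
  have DDe: "D = (a1 * (d l * g1), a2 * (p l * g2), a3 * (q l * g3))"
  proof -
    have "prod f {1..L} = prod f {l<..L} * prod f {1..l}" for f :: "nat \<Rightarrow> nat"
      unfolding s2 by (rule prod.union_disjoint) auto
    then show ?thesis using DLe unfolding D_def DL_def dims_def a1_def a2_def a3_def by simp
  qed
  have DAe: "DA = (a1,a2,a3)" by (simp add: DA_def dims_def a1_def a2_def a3_def)

  have Kin: "inner3 D (K Y B) (K Y' B') = inner3 DA Y Y' * (inner3 Dl B B' * inner3 DG Gh Gh)" for Y Y' B B'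
  proof -
    have p1: "d l * g1 > 0" "p l * g2 > 0" "q l * g3 > 0" using dl g by auto
    show ?thesis unfolding K_def DDe DLe DGe DAe Dl_def
      by (simp only: inner3_kron[OF p1] inner3_kron[OF g])
  qed
  have nAh: "inner3 DA Ah Ah = 1"
  proof -
    have "sqrt (inner3 DA Ah Ah) = 1" using assms(7) unfolding fnorm3_def DA_def Ah_def .
    then show ?thesis by simp
  qed
  have nA: "inner3 DA A A = 1"
  proof -
    have "sqrt (inner3 DA A A) = 1" using assms(8) unfolding fnorm3_def DA_def A_def .
    then show ?thesis by simp
  qed
  have nG: "inner3 DG Gh Gh = 1"
  proof -
    have "sqrt (inner3 DG Gh Gh) = 1" using assms(9) unfolding fnorm3_def DG_def Gh_def .
    then show ?thesis by simp
  qed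

  have XP: "inner3 Dl B (Xtilde L d p q l Xi Y Gh) = inner3 D Xi (K Y B)" for B Xi Y
    unfolding Dl_def D_def K_def DL_def DG_def
    using Xtilde_prop[OF DLe[unfolded DL_def] DGe[unfolded DG_def] g dl] .
  have xhc: "xh i \<in> carrier_vec m" "x i \<in> carrier_vec m" for i
    unfolding xh_def x_def vec3_def m_def carrier_vec_def by simp_all
  have VS: "vec3 Dl U \<bullet> v = inner3 Dl (ar v) U" if "v \<in> carrier_vec m" for U v
  proof -
    have "v \<in> carrier_vec (d l * p l * q l)" using that unfolding m_def .
    then show ?thesis unfolding Dl_def ar_def by (rule vec3_scalar[OF dl(2,3)])
  qed
  have SP: "u \<bullet> v = inner3 Dl (ar u) (ar v)" if "u \<in> carrier_vec m" "v \<in> carrier_vec m" for u v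
  proof -
    have "u \<in> carrier_vec (d l * p l * q l)" using that unfolding m_def by simp
    then have "vec3 Dl (ar u) = u" unfolding Dl_def ar_def by (rule vec3_arrv[OF dl(2,3)])
    then show ?thesis using VS[OF that(2), of "ar u"] by (simp add: inner3_comm)
  qed
  have xhv: "xh i \<bullet> v = inner3 D (X i) (K Ah (ar v))" if "v \<in> carrier_vec m" for i v
    using VS[OF that] XP unfolding xh_def Xth_def Dl_def by simp
  have xv: "x i \<bullet> v = inner3 D (X i) (K A (ar v))" if "v \<in> carrier_vec m" for i v
    using VS[OF that] XP unfolding x_def Xt_def Dl_def by simp
  have RIPK: "(1-\<delta>) * inner3 D T T \<le> E T \<and> E T \<le> (1+\<delta>) * inner3 D T T"
    if T: "T = (\<lambda>h j k. K Ah B1 h j k + K A B2 h j k)" for T B1 B2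
  proof -
    define F1 where "F1 = (\<lambda>k. if k < l then Ghf k else if k = l then B1 else Ahf k)"
    define F2 where "F2 = (\<lambda>k. if k < l then Ghf k else if k = l then B2 else Af k)"
    define S' where "S' = (\<lambda>h j k. kron_range d p q F1 L 1 h j k + kron_range d p q F2 L 1 h j k)"
    have "\<forall>B1 B2. (1 - \<delta>) * (fnorm3 D (\<lambda>h j k. kron_range d p q B1 L 1 h j k + kron_range d p q B2 L 1 h j k))\<^sup>2
        \<le> E (\<lambda>h j k. kron_range d p q B1 L 1 h j k + kron_range d p q B2 L 1 h j k) \<and>
       E (\<lambda>h j k. kron_range d p q B1 L 1 h j k + kron_range d p q B2 L 1 h j k)
        \<le> (1 + \<delta>) * (fnorm3 D (\<lambda>h j k. kron_range d p q B1 L 1 h j k + kron_range d p q B2 L 1 h j k))\<^sup>2"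
      using assms(5) unfolding RIP_def Let_def E_def D_def .
    then have R: "(1-\<delta>) * (fnorm3 D S')^2 \<le> E S' \<and> E S' \<le> (1+\<delta>) * (fnorm3 D S')^2"
      unfolding S'_def by blast
    have agree: "S' h j k = T h j k" if "h < prod d {1..L}" "j < prod p {1..L}" "k < prod q {1..L}" for h j k
      unfolding S'_def T K_def DL_def DG_def Ah_def A_def Gh_def F1_def F2_def
      using kron_full[OF pos assms(6) that, of Ghf B1 Ahf] kron_full[OF pos assms(6) that, of Ghf B2 Af] by simp
    have Dt: "D = (prod d {1..L}, prod p {1..L}, prod q {1..L})" by (simp add: D_def dims_def)
    have i1: "inner3 D (X i) S' = inner3 D (X i) T" for i unfolding Dt by (rule inner3_cong_right) (rule agree)
    have i2: "inner3 D S' S' = inner3 D T T" unfolding Dt by (rule inner3_cong_both) (rule agree)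
    have "(fnorm3 D S')^2 = inner3 D S' S'" unfolding fnorm3_def using inner3_nonneg by simp
    moreover have "E S' = E T" unfolding E_def using i1 by simp
    ultimately show ?thesis using R i2 by simp
  qed
  have Tin: "inner3 D (X i) (\<lambda>h j k. K Ah B1 h j k + K A B2 h j k) = inner3 Dl B1 (Xth i) + inner3 Dl B2 (Xt i)" for i B1 B2
    unfolding inner3_add_right Xth_def Xt_def XP ..
  have Tnorm: "inner3 D (\<lambda>h j k. K Ah B1 h j k + K A B2 h j k) (\<lambda>h j k. K Ah B1 h j k + K A B2 h j k)
      = inner3 Dl B1 B1 + 2 * c * inner3 Dl B1 B2 + inner3 Dl B2 B2" for B1 B2
  proof -
    have cc: "inner3 DA A Ah = c" unfolding c_def by (rule inner3_comm)
    have bb: "inner3 Dl B2 B1 = inner3 Dl B1 B2" by (rule inner3_comm)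
    show ?thesis unfolding inner3_add_right inner3_add_left Kin nAh nA nG c_def[symmetric] cc bb by simp
  qed
  have xhu: "xh i \<bullet> u = inner3 Dl (ar u) (Xth i)" if "u \<in> carrier_vec m" for i u
    unfolding xh_def Dl_def[symmetric] by (rule VS[OF that])
  have xu: "x i \<bullet> u = inner3 Dl (ar u) (Xt i)" if "u \<in> carrier_vec m" for i u
    unfolding x_def Dl_def[symmetric] by (rule VS[OF that])
  have zl: "inner3 Dl (\<lambda>h j k. 0) W = 0" "inner3 Dl W (\<lambda>h j k. 0) = 0" for W
    using inner3_zero_left[of Dl W] inner3_comm[of Dl W "\<lambda>h j k. 0"] by simp_all
  have Kz: "K A (\<lambda>h j k. 0) = (\<lambda>h j k. 0)" unfolding K_def kron3_def by (simp add: fun_eq_iff split: prod.splits)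
  have PD: "(1-\<delta>) * (u \<bullet> u) \<le> u \<bullet> (Sh *\<^sub>v u)" if u: "u \<in> carrier_vec m" for u
  proof -
    define T where "T = (\<lambda>h j k. K Ah (ar u) h j k + K A (\<lambda>h j k. 0) h j k)"
    have R: "(1-\<delta>) * inner3 D T T \<le> E T" using RIPK[OF T_def] by simp
    have "inner3 D T T = u \<bullet> u" unfolding T_def Tnorm zl SP[OF u u] by simp
    moreover have "inner3 D (X i) T = xh i \<bullet> u" for i unfolding T_def Tin zl xhu[OF u] by simp
    moreover have "u \<bullet> (Sh *\<^sub>v u) = 1 / real n * (\<Sum>i=1..n. (xh i \<bullet> u)^2)"
      unfolding Sh_def cov_quad[OF u u xhc(1) xhc(1)]
      using comm_scalar_prod[OF u xhc(1)] by (simp add: power2_eq_square)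
    ultimately show ?thesis using R unfolding E_def by simp
  qed
  have CR: "4*t*(1 / real n * (\<Sum>i=1..n. (xh i \<bullet> u) * (c * (xh i \<bullet> v) - x i \<bullet> v)))
       \<le> 2*\<delta>*(u \<bullet> u + t^2*((1-c^2)*(v \<bullet> v)))"
    if u: "u \<in> carrier_vec m" and v: "v \<in> carrier_vec m" for u v t
  proof -
    define a where "a = (\<lambda>i. xh i \<bullet> u)"
    define b where "b = (\<lambda>i. c * (xh i \<bullet> v) - x i \<bullet> v)"
    define N where "N = (\<lambda>s::real. u \<bullet> u + s^2*((1-c^2)*(v \<bullet> v)))"
    define T where "T = (\<lambda>s h j k. K Ah (\<lambda>h j k. ar u h j k + (s*c) * ar v h j k) h j k + K A (\<lambda>h j k. (-s) * ar v h j k) h j k)"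
    have uv: "inner3 Dl (ar v) (ar u) = inner3 Dl (ar u) (ar v)" by (rule inner3_comm)
    have TX: "inner3 D (X i) (T s) = a i + s * b i" for i s
      unfolding T_def Tin inner3_axpy_left inner3_scale_left xhu[OF u, symmetric] xhu[OF v, symmetric] xu[OF v, symmetric]
        a_def b_def by (simp add: algebra_simps)
    have TN: "inner3 D (T s) (T s) = N s" for s
      unfolding T_def Tnorm inner3_axpy_left inner3_axpy_right inner3_scale_left inner3_scale_right
        SP[OF u u, symmetric] SP[OF v v, symmetric] SP[OF u v, symmetric] uv N_def
      by (simp add: algebra_simps power2_eq_square)
    have ET: "E (T s) = 1 / real n * (\<Sum>i=1..n. (a i + s * b i)^2)" for s
      unfolding E_def TX ..
    have Teq: "T s = (\<lambda>h j k. K Ah (\<lambda>h j k. ar u h j k + (s*c) * ar v h j k) h j k + K A (\<lambda>h j k. (-s) * ar v h j k) h j k)" for s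
      unfolding T_def ..
    have up: "E (T t) \<le> (1+\<delta>) * N t" using RIPK[OF Teq[of t]] TN[of t] by simp
    have lo: "(1-\<delta>) * N (-t) \<le> E (T (-t))" using RIPK[OF Teq[of "-t"]] TN[of "-t"] by simp
    have "N (-t) = N t" unfolding N_def by simp
    with lo have lo: "(1-\<delta>) * N t \<le> E (T (-t))" by simp
    have diff: "E (T t) - E (T (-t)) = 4*t*(1 / real n * (\<Sum>i=1..n. a i * b i))"
    proof -
      have "(\<Sum>i=1..n. (a i + t * b i)^2) - (\<Sum>i=1..n. (a i + (-t) * b i)^2) = (\<Sum>i=1..n. 4*t*(a i * b i))"
        unfolding sum_subtractf[symmetric] by (rule sum.cong) (auto simp: power2_eq_square algebra_simps)
      moreover have "(\<Sum>i=1..n. 4*t*(a i * b i)) = 4*t*(\<Sum>i=1..n. a i * b i)" by (simp add: sum_distrib_left)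
      ultimately have e: "(\<Sum>i=1..n. (a i + t * b i)^2) - (\<Sum>i=1..n. (a i + (-t) * b i)^2) = 4*t*(\<Sum>i=1..n. a i * b i)" by simp
      have "E (T t) - E (T (-t)) = 1 / real n * ((\<Sum>i=1..n. (a i + t * b i)^2) - (\<Sum>i=1..n. (a i + (-t) * b i)^2))"
        unfolding ET by (simp only: right_diff_distrib)
      then show ?thesis unfolding e by simp
    qed
    show ?thesis using up lo diff unfolding a_def b_def N_def by (simp add: algebra_simps)
  qed
  have Shc: "Sh \<in> carrier_mat m m" "S \<in> carrier_mat m m" by (simp_all add: Sh_def S_def cov_mat_def)
  have inj: "u = 0\<^sub>v m" if u: "u \<in> carrier_vec m" and z: "Sh *\<^sub>v u = 0\<^sub>v m" for u
  proof -
    have "(1-\<delta>) * (u \<bullet> u) \<le> 0" using PD[OF u] z u by simp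
    moreover have "u \<bullet> u \<ge> 0" by (rule scalar_prod_self_nonneg)
    moreover have "1 - \<delta> > 0" using assms(4) by simp
    ultimately have "u \<bullet> u = 0" by (simp add: mult_le_0_iff)
    then show ?thesis by (rule scalar_prod_self_zero[OF u])
  qed
  have det: "det Sh \<noteq> 0" using det_0_iff_vec_prod_zero_field[OF Shc(1)] inj by auto
  obtain B where B: "B \<in> carrier_mat m m" "Sh * B = 1\<^sub>m m" "B * Sh = 1\<^sub>m m"
    using det_non_zero_imp_unit[OF Shc(1) det] Shc(1) unfolding Units_def ring_mat_def by auto
  define Si where "Si = mat_inv m Sh"
  have Si: "Si \<in> carrier_mat m m \<and> Sh * Si = 1\<^sub>m m \<and> Si * Sh = 1\<^sub>m m"
    unfolding Si_def mat_inv_def by (rule someI_ex) (use B in blast)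
  have Sic: "Si \<in> carrier_mat m m" and SiR: "Sh * Si = 1\<^sub>m m" using Si by auto
  have inv: "invertible_mat Sh"
    unfolding invertible_mat_def inverts_mat_def using Shc(1) B by (auto intro!: exI[of _ B])
  define M where "M = c \<cdot>\<^sub>m Sh - S"
  have Mc: "M \<in> carrier_mat m m" using Shc unfolding M_def by (simp add: minus_carrier_mat)
  define z where "z = (\<lambda>i. c \<cdot>\<^sub>v xh i - x i)"
  have zc: "z i \<in> carrier_vec m" for i using xhc unfolding z_def by simp
  have Mz: "M = cov_mat m n xh z" unfolding M_def Sh_def S_def z_def by (rule cov_comb[OF xhc(1) xhc(2)])
  have Cv: "u \<bullet> (M *\<^sub>v v) = 1 / real n * (\<Sum>i=1..n. (xh i \<bullet> u) * (c * (xh i \<bullet> v) - x i \<bullet> v))"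
    if u: "u \<in> carrier_vec m" and v: "v \<in> carrier_vec m" for u v
  proof -
    have "u \<bullet> (M *\<^sub>v v) = 1 / real n * (\<Sum>i=1..n. (u \<bullet> xh i) * (z i \<bullet> v))"
      unfolding Mz by (rule cov_quad[OF u v xhc(1) zc])
    also have "\<dots> = 1 / real n * (\<Sum>i=1..n. (xh i \<bullet> u) * (c * (xh i \<bullet> v) - x i \<bullet> v))"
      unfolding z_def smult_minus_sprod[OF xhc(1) xhc(2) v] using comm_scalar_prod[OF u xhc(1)] by simp
    finally show ?thesis .
  qed
  have c2: "c^2 \<le> 1"
  proof -
    have "0 \<le> inner3 DA (\<lambda>h j k. c * Ah h j k + (-1) * A h j k) (\<lambda>h j k. c * Ah h j k + (-1) * A h j k)"
      by (rule inner3_nonneg)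
    also have "\<dots> = 1 - c^2"
      unfolding inner3_lin_left inner3_lin_right nAh nA c_def[symmetric] inner3_comm[of DA A Ah]
      by (simp add: power2_eq_square)
    finally show ?thesis by simp
  qed
  have dist: "dist3 (dims d p q {l<..L}) Ah A = sqrt (1 - c^2)"
    unfolding dist3_def fnorm3_def DA_def[symmetric] nAh nA c_def by simp
  have bnd: "vnorm ((Si * M) *\<^sub>v v) \<le> 3 * \<delta> / (1 - 3 * \<delta>) * sqrt (1 - c^2)"
    if v: "v \<in> carrier_vec m" and vn: "vnorm v \<le> 1" for v
  proof -
    define u where "u = Si *\<^sub>v (M *\<^sub>v v)"
    have uc: "u \<in> carrier_vec m" unfolding u_def using Sic Mc v by auto
    have ue: "(Si * M) *\<^sub>v v = u" unfolding u_def using Sic Mc v by simp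
    have "Sh *\<^sub>v u = (Sh * Si) *\<^sub>v (M *\<^sub>v v)" unfolding u_def using Sic Mc v Shc by simp
    then have Shu: "Sh *\<^sub>v u = M *\<^sub>v v" using SiR Mc v by simp
    define C where "C = 1 / real n * (\<Sum>i=1..n. (xh i \<bullet> u) * (c * (xh i \<bullet> v) - x i \<bullet> v))"
    have "(1-\<delta>) * (u \<bullet> u) \<le> C" using PD[OF uc] Cv[OF uc v] Shu unfolding C_def by simp
    have w0: "(1-c^2)*(v \<bullet> v) \<ge> 0" using c2 scalar_prod_self_nonneg[of v] by simp
    define a where "a = vnorm u"
    define b where "b = sqrt ((1-c^2)*(v \<bullet> v))"
    have a2: "a^2 = u \<bullet> u" unfolding a_def vnorm_def using scalar_prod_self_nonneg[of u] by simp
    have b2: "b^2 = (1-c^2)*(v \<bullet> v)" unfolding b_def using w0 by simp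
    have key: "(1-\<delta>)*a \<le> \<delta>*b"
    proof (rule real_key[OF assms(3) assms(4)])
      show "0 \<le> a" unfolding a_def vnorm_def using scalar_prod_self_nonneg[of u] by simp
      show "0 \<le> b" unfolding b_def using w0 by simp
      show "(1-\<delta>)*a^2 \<le> C" unfolding a2 by fact
      show "4*t*C \<le> 2*\<delta>*(a^2 + t^2*b^2)" if "t > 0" for t
        unfolding a2 b2 C_def by (rule CR[OF uc v])
    qed
    have "b = sqrt (1-c^2) * vnorm v" unfolding b_def vnorm_def by (simp add: real_sqrt_mult)
    also have "\<dots> \<le> sqrt (1-c^2)" using vn c2 mult_left_le[of "vnorm v" "sqrt (1-c^2)"] by simp
    finally have bb: "b \<le> sqrt (1-c^2)" .
    have d1: "1 - \<delta> > 0" "1 - 3*\<delta> > 0" using assms(3,4) by auto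
    have "a \<le> \<delta> / (1-\<delta>) * b" using key d1 by (simp add: field_simps)
    also have "\<dots> \<le> \<delta> / (1-\<delta>) * sqrt (1-c^2)"
      using bb assms(3) d1 by (intro mult_left_mono) auto
    also have "\<dots> \<le> 3 * \<delta> / (1 - 3 * \<delta>) * sqrt (1 - c^2)"
    proof (rule mult_right_mono)
      show "\<delta> / (1-\<delta>) \<le> 3 * \<delta> / (1 - 3 * \<delta>)" using d1 assms(3) by (simp add: field_simps)
    qed (use c2 in simp)
    finally show ?thesis unfolding ue a_def .
  qed
  have sn: "spec_norm m (Si * M) \<le> 3 * \<delta> / (1 - 3 * \<delta>) * sqrt (1 - c^2)"
    unfolding spec_norm_def
  proof (rule cSup_least)
    show "{vnorm ((Si * M) *\<^sub>v v) |v. v \<in> carrier_vec m \<and> vnorm v \<le> 1} \<noteq> {}"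
      by (rule ex_in_conv[THEN iffD1]) (rule exI[of _ "vnorm ((Si * M) *\<^sub>v 0\<^sub>v m)"], auto simp: vnorm_def)
    show "\<And>y. y \<in> {vnorm ((Si * M) *\<^sub>v v) |v. v \<in> carrier_vec m \<and> vnorm v \<le> 1} \<Longrightarrow> y \<le> 3 * \<delta> / (1 - 3 * \<delta>) * sqrt (1 - c^2)"
      using bnd by auto
  qed
  have main: "invertible_mat Sh \<and> spec_norm m (mat_inv m Sh * (c \<cdot>\<^sub>m Sh - S)) \<le> 3 * \<delta> / (1 - 3 * \<delta>) * dist3 (dims d p q {l<..L}) Ah A"
    using inv sn unfolding dist Si_def M_def by simp
  show ?thesis using main unfolding Let_def Sh_def S_def xh_def x_def Xth_def Xt_def m_def c_def DA_def Ah_def A_def Gh_def .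
qed


end
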